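(* In the setting of the context, let $(l_u,\delta,l_0)\in\widetilde{\mathrm{CC}}(\tilde X)$, choose an isomorphism $\iota:\mathbb{C}((\tilde z))[[\lambda]]\xrightarrow{\sim}l_u$ whose reduction mod $\lambda$ maps $\mathbb{C}[[\tilde z]]$ onto $l_0$, and let $a(\tilde z,\lambda)=\sum_i a_i(\tilde z)\lambda^i\in\mathbb{C}((\tilde z))[[\lambda]]$ be defined by $(\lambda\frac{d}{d\tilde z}+a)d\tilde z=\iota^{-1}\delta\iota$. Then the essential fiber of the functor $\widetilde{\mathrm{Conn}}(\tilde X)\to\widetilde{\mathrm{CC}}(\tilde X)$ over $(l_u,\delta,l_0)$ is either empty or equivalent to a one-point set, and it is non-empty if and only if $a_1(\tilde z)\in\tilde z^{-1}\mathbb{C}[[\tilde z]]$ and $\operatorname{res}_{\tilde z=0}a(\tilde z,\lambda)=-\lambda/2$.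
   Context: Let $t,d\in\mathbb{C}[[z]]$ with $t^2-4d$ having a simple zero at $0$; $\tilde X=\operatorname{Spf}\mathbb{C}[[\tilde z]]$ is the spectral curve $\xi^2-t\xi+d=0$ over $\operatorname{Spf}\mathbb{C}[[z]]$, $\tilde z=\sqrt{t^2-4d}$, and $\mu=\xi\,dz|_{\tilde X}$. A $\lambda$-connection on a module $M$ over $\mathbb{C}((\tilde z))[[\lambda]]$ or $\mathbb{C}[[\tilde z,\lambda]]$ is a $\mathbb{C}[[\lambda]]$-linear $\delta$ with $\delta(fs)=f\delta s+\lambda s\,df$. $\widetilde{\mathrm{Conn}}(\tilde X)$: groupoid of $(l,\delta)$, $l$ free of rank 1 over $\mathbb{C}[[\tilde z,\lambda]]$, $\delta:l\to\tilde z^{-1}l\,d\tilde z$ a $\lambda$-connection with residue $-\lambda/2$ and reduction mod $\lambda$ equal to $\mu$. $\widetilde{\mathrm{CC}}(\tilde X)$: groupoid of $(l_u,\delta,l_0)$, $l_u$ free of rank 1 over $\mathbb{C}((\tilde z))[[\lambda]]$, $\delta:l_u\to l_u\,d\tilde z$ a $\lambda$-connection with reduction mod $\lambda$ equal to $\mu$, $l_0$ a $\mathbb{C}[[\tilde z]]$-lattice in $l_u/\lambda l_u$. Morphisms: isomorphisms respecting all structure. The functor sends $(l,\delta)\mapsto(l\otimes\mathbb{C}((\tilde z)),\delta,l/\lambda l)$. The essential fiber of a functor $F:G_1\to G_2$ over $\gamma_2$ is the groupoid of pairs $(\gamma_1,f)$ with $\gamma_1\in G_1$ and $f:F(\gamma_1)\xrightarrow{\sim}\gamma_2$.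 *)

theory Defs
  imports "HOL-Computational_Algebra.Computational_Algebra"
begin

text \<open>C[[zt]] = complex fps; C((zt)) = complex fls;
  C((zt))[[lambda]] = complex fls fps (outer variable lambda);
  C[[zt,lambda]] = complex fps fps (outer variable lambda, coefficients in C[[zt]]).
  One-forms f d(zt) are represented by their coefficient f.\<close>

definition lam :: "complex fls fps" where
  "lam = fps_X"

definition zinv :: "complex fls fps" where
  "zinv = fps_const (fls_X_intpow (-1))"

definition dzt :: "complex fls fps \<Rightarrow> complex fls fps" where
  "dzt s = Abs_fps (\<lambda>n. fls_deriv (s $ n))"

definition emb :: "complex fps fps \<Rightarrow> complex fls fps" where
  "emb b = Abs_fps (\<lambda>n. fps_to_fls (b $ n))"

definition is_unit_ser :: "'a::comm_ring_1 \<Rightarrow> bool" where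
  "is_unit_ser g \<longleftrightarrow> (\<exists>k. g * k = 1)"

text \<open>Spectral curve: w(zt) is the image of z under C[[z]] -> C[[zt]], characterised by
  w(0)=0 and (t^2-4d)(w(zt)) = zt^2; xi = (t(w) + zt)/2 and mu = xi dz = mu_coeff d(zt).\<close>
definition mu_coeff :: "complex fps \<Rightarrow> complex fps \<Rightarrow> complex fps \<Rightarrow> complex fps" where
  "mu_coeff t d w = fps_const (1/2) * ((t oo w) + fps_X) * fps_deriv w"

text \<open>lambda-connection on l_u = C((zt))[[lambda]] (Leibniz rule; C[[lambda]]-linearity follows).\<close>
definition lambda_conn :: "(complex fls fps \<Rightarrow> complex fls fps) \<Rightarrow> bool" where
  "lambda_conn D \<longleftrightarrow> (\<forall>f s. D (f * s) = f * D s + lam * dzt f * s)"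

definition is_lattice :: "complex fls set \<Rightarrow> bool" where
  "is_lattice L \<longleftrightarrow> (\<exists>c. c \<noteq> 0 \<and> L = range (\<lambda>p. c * fps_to_fls p))"

text \<open>Objects of Conn~ (with l = C[[zt,lambda]] and a chosen generator): the connection form
  beta, giving delta s = lambda ds + zt^(-1) beta s (values in zt^(-1) l d(zt)).\<close>
definition conn_op :: "complex fps fps \<Rightarrow> complex fps fps \<Rightarrow> complex fls fps" where
  "conn_op b s = lam * dzt (emb s) + zinv * emb b * emb s"

definition conn_obj :: "complex fps \<Rightarrow> complex fps fps \<Rightarrow> bool" where
  "conn_obj m b \<longleftrightarrow>
     (\<forall>i. fls_residue ((conn_op b 1) $ i) = (if i = 1 then -1/2 else 0)) \<and>
     (\<forall>s. (conn_op b s) $ 0 = fps_to_fls m * fps_to_fls (s $ 0))"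

definition conn_hom :: "complex fps fps \<Rightarrow> complex fps fps \<Rightarrow> complex fps fps \<Rightarrow> bool" where
  "conn_hom b b' h \<longleftrightarrow> is_unit_ser h \<and> (\<forall>s. conn_op b' (h * s) = emb h * conn_op b s)"

text \<open>The functor: extension of delta to l tensor C((zt)) = C((zt))[[lambda]].\<close>
definition ext_op :: "complex fps fps \<Rightarrow> complex fls fps \<Rightarrow> complex fls fps" where
  "ext_op b s = lam * dzt s + zinv * emb b * s"

text \<open>Objects of the essential fiber over (C((zt))[[lambda]], D, L0): pairs (beta, g),
  g = the isomorphism F(beta) -> (l_u, D, L0) (multiplication by g).\<close>
definition fib_obj ::
  "complex fps \<Rightarrow> (complex fls fps \<Rightarrow> complex fls fps) \<Rightarrow> complex fls set
     \<Rightarrow> complex fps fps \<times> complex fls fps \<Rightarrow> bool" where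
  "fib_obj m D L0 x \<longleftrightarrow> (case x of (b, g) \<Rightarrow>
     conn_obj m b \<and> is_unit_ser g \<and> (\<forall>s. D (g * s) = g * ext_op b s) \<and>
     range (\<lambda>p. (g $ 0) * fps_to_fls p) = L0)"

definition fib_hom ::
  "complex fps fps \<times> complex fls fps \<Rightarrow> complex fps fps \<times> complex fls fps
     \<Rightarrow> complex fps fps \<Rightarrow> bool" where
  "fib_hom x y h \<longleftrightarrow> (case x of (b, g) \<Rightarrow> case y of (b', g') \<Rightarrow>
     conn_hom b b' h \<and> g' * emb h = g)"

end

theory Submission
  imports Defs
begin

unbundle fps_syntax

lemma dzt_nth [simp]: "dzt s $ n = fls_deriv (s $ n)"
  by (simp add: dzt_def)

lemma emb_nth [simp]: "emb s $ n = fps_to_fls (s $ n)"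
  by (simp add: emb_def)

lemma dzt_add [simp]: "dzt (x + y) = dzt x + dzt y"
  by (rule fps_ext) simp

lemma dzt_diff [simp]: "dzt (x - y) = dzt x - dzt y"
  by (rule fps_ext) simp

lemma dzt_one [simp]: "dzt 1 = 0"
  by (rule fps_ext) (simp add: fps_one_nth)

lemma dzt_mult: "dzt (x * y) = dzt x * y + x * dzt y"
proof (rule fps_ext)
  fix n
  show "dzt (x * y) $ n = (dzt x * y + x * dzt y) $ n"
  proof -
    have "dzt (x * y) $ n = (\<Sum>i=0..n. fls_deriv (x$i) * y$(n-i) + x$i * fls_deriv (y$(n-i)))"
      by (simp add: fps_mult_nth fls_deriv_sum add.commute)
    also have "\<dots> = (dzt x * y + x * dzt y) $ n"
      by (simp only: fps_add_nth fps_mult_nth dzt_nth sum.distrib)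
    finally show ?thesis .
  qed
qed

lemma dzt_deriv: "dzt (fps_deriv x) = fps_deriv (dzt x)"
  by (rule fps_ext) simp

lemma fps_to_fls_sum: "fps_to_fls (sum f A) = (\<Sum>i\<in>A. fps_to_fls (f i))"
  by (induct A rule: infinite_finite_induct) simp_all

lemma emb_mult: "emb (x * y) = emb x * emb y"
proof (rule fps_ext)
  fix n
  have "fps_to_fls (\<Sum>i=0..n. x$i * y$(n-i)) = (\<Sum>i=0..n. fps_to_fls (x$i * y$(n-i)))"
    by (rule fps_to_fls_sum)
  then show "emb (x * y) $ n = (emb x * emb y) $ n"
    by (simp add: fps_mult_nth fls_times_fps_to_fls)
qed

lemma emb_one [simp]: "emb 1 = 1"
  by (rule fps_ext) (simp add: fps_one_nth)

lemma emb_inj: "emb x = emb y \<Longrightarrow> x = y"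
proof (rule fps_ext)
  fix n assume "emb x = emb y"
  then have "emb x $ n = emb y $ n" by simp
  then show "x $ n = y $ n" by simp
qed

lemma lam_nth [simp]: "(lam * f) $ n = (if n = 0 then 0 else f $ (n - 1))"
  by (simp add: lam_def)

lemma zinv_nth [simp]: "(zinv * f) $ n = fls_X_intpow (-1) * f $ n"
  by (simp add: zinv_def)

lemma zinv_coeff: "(fls_X_intpow (-1) * (f::complex fls)) $$ k = f $$ (k + 1)"
  by (subst fls_X_intpow_times_conv_shift(1)) simp

lemma res_zinv: "fls_residue (fls_X_intpow (-1) * fps_to_fls (p::complex fps)) = p $ 0"
  unfolding fls_residue_def zinv_coeff by simp

lemma zinv_X: "fls_X_intpow (-1) * fps_to_fls (fps_X * (w::complex fps)) = fps_to_fls w"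
proof (rule fls_eqI)
  fix k :: int
  show "(fls_X_intpow (-1) * fps_to_fls (fps_X * w)) $$ k = fps_to_fls w $$ k"
    unfolding zinv_coeff by (simp add: nat_add_distrib)
qed

lemma zinv_shift:
  assumes "(p::complex fps) $ 0 = 0"
  shows "fls_X_intpow (-1) * fps_to_fls p = fps_to_fls (fps_shift 1 p)"
proof (rule fls_eqI)
  fix k :: int
  show "(fls_X_intpow (-1) * fps_to_fls p) $$ k = fps_to_fls (fps_shift 1 p) $$ k"
    unfolding zinv_coeff using assms by (cases "k < -1"; cases "k = -1") (auto simp: nat_add_distrib)
qed

lemma deriv_unique:
  fixes E W :: "complex fls fps"
  assumes "fps_deriv E = E * W" "E $ 0 = 0"
  shows "E = 0"
proof -
  have "E $ n = 0" for n
  proof (induct n rule: less_induct)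
    case (less n)
    show ?case
    proof (cases n)
      case 0 then show ?thesis using assms by simp
    next
      case (Suc m)
      have "fps_deriv E $ m = (E * W) $ m" using assms by simp
      also have "\<dots> = 0" unfolding fps_mult_nth
        by (rule sum.neutral) (use less Suc in auto)
      finally have "of_nat (m + 1) * E $ (m + 1) = (0::complex fls)" by simp
      moreover have "(of_nat (m + 1) :: complex fls) \<noteq> 0"
        by (metis of_nat_eq_0_iff add_is_0 one_neq_zero)
      ultimately show ?thesis using Suc by simp
    qed
  qed
  then show ?thesis by (intro fps_ext) simp
qed

lemma key_fls:
  fixes f :: "complex fls" and e F :: "complex fps"
  assumes "fls_deriv f - fps_to_fls e * f = fps_to_fls F"
  shows "\<exists>p. f = fps_to_fls p"
proof (cases "fls_subdegree f \<ge> 0")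
  case True
  then show ?thesis by (intro exI[of _ "fls_regpart f"]) simp
next
  case False
  define k where "k = fls_subdegree f"
  have f0: "f \<noteq> 0" using False by auto
  have nz: "f $$ k \<noteq> 0" using f0 by (simp add: k_def)
  have "(fps_to_fls e * f) $$ (k - 1) = 0"
    by (rule fls_times_nth_eq0) (use fls_subdegree_fls_to_fps_gt0[of e] in \<open>simp add: k_def\<close>)
  moreover have "fps_to_fls F $$ (k - 1) = 0" using False by (simp add: k_def)
  ultimately have "fls_deriv f $$ (k - 1) = 0"
    using arg_cong[OF assms, of "\<lambda>x. x $$ (k - 1)"] by simp
  then have "of_int k * f $$ k = 0" by simp
  moreover have "(of_int k :: complex) \<noteq> 0" using False by (simp add: k_def)
  ultimately show ?thesis using nz by simp
qed

lemma lattice_lemma: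
  fixes x y y' :: "complex fls"
  assumes "range (\<lambda>p. x * fps_to_fls p) = range (\<lambda>p. y * fps_to_fls p)" "y * y' = 1"
  shows "\<exists>v. y' * x = fps_to_fls v \<and> v $ 0 \<noteq> 0"
proof -
  have "x * fps_to_fls 1 \<in> range (\<lambda>p. y * fps_to_fls p)" using assms(1) by blast
  then obtain v where v: "x = y * fps_to_fls v" by auto
  have "y * fps_to_fls 1 \<in> range (\<lambda>p. x * fps_to_fls p)" using assms(1) by blast
  then obtain v' where v': "y = x * fps_to_fls v'" by auto
  have y0: "y \<noteq> 0" using assms(2) by auto
  have "y * 1 = y * (fps_to_fls v * fps_to_fls v')"
    using v v' by (metis mult.assoc mult_1_right mult.commute)
  then have "y * 1 = y * fps_to_fls (v * v')" by (simp add: fls_times_fps_to_fls)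
  then have "fps_to_fls (v * v') = 1" using y0 by simp
  then have "v * v' = 1" by simp
  then have "v $ 0 * v' $ 0 = 1" by (metis fps_mult_nth_0 fps_one_nth)
  then have "v $ 0 \<noteq> 0" by auto
  moreover have "y' * x = fps_to_fls v" using v assms(2) by (simp add: mult.assoc[symmetric] mult.commute[of y'])
  ultimately show ?thesis by blast
qed

lemma conn_op_one: "conn_op b 1 = zinv * emb b"
  by (simp add: conn_op_def)

lemma ext_op_one: "ext_op b 1 = zinv * emb b"
  by (simp add: ext_op_def)

lemma conn_obj_facts:
  assumes "conn_obj m b"
  shows "(zinv * emb b) $ 0 = fps_to_fls m" "\<And>i. (b $ i) $ 0 = (if i = 1 then -1/2 else 0)"
proof -
  have "(conn_op b 1) $ 0 = fps_to_fls m * fps_to_fls ((1::complex fps fps) $ 0)"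
    using assms unfolding conn_obj_def by blast
  then show "(zinv * emb b) $ 0 = fps_to_fls m" by (simp add: conn_op_one)
  fix i
  have "fls_residue ((conn_op b 1) $ i) = (if i = 1 then -1/2 else 0)"
    using assms unfolding conn_obj_def by blast
  then show "(b $ i) $ 0 = (if i = 1 then -1/2 else 0)"
    by (simp only: conn_op_one zinv_nth emb_nth res_zinv)
qed

lemma closed_sum:
  assumes "\<forall>i\<in>A. \<exists>p. f i = fps_to_fls p"
  shows "\<exists>p. sum f A = fps_to_fls (p::complex fps)"
  using assms
proof (induct A rule: infinite_finite_induct)
  case (insert x F)
  then obtain p q where "f x = fps_to_fls p" "sum f F = fps_to_fls q" by auto
  then show ?case using insert by (intro exI[of _ "p + q"]) simp
qed auto

lemma part1:
  assumes x: "fib_obj m D L0 (b, g)" and y: "fib_obj m D L0 (b', g')"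
  shows "\<exists>!h. fib_hom (b, g) (b', g') h"
proof -
  from x have cb: "conn_obj m b" and gu: "is_unit_ser g" and Dg: "\<forall>s. D (g * s) = g * ext_op b s"
    and Lg: "range (\<lambda>p. (g $ 0) * fps_to_fls p) = L0" unfolding fib_obj_def by auto
  from y have cb': "conn_obj m b'" and gu': "is_unit_ser g'" and Dg': "\<forall>s. D (g' * s) = g' * ext_op b' s"
    and Lg': "range (\<lambda>p. (g' $ 0) * fps_to_fls p) = L0" unfolding fib_obj_def by auto
  obtain k' where k': "g' * k' = 1" using gu' unfolding is_unit_ser_def by auto
  define r where "r = k' * g"
  have gr: "g' * r = g" using k' by (simp add: r_def mult.assoc[symmetric])
  have "g' * ext_op b' r = g * ext_op b 1" using Dg Dg' gr by (metis mult_1_right)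
  also have "\<dots> = g' * (r * ext_op b 1)" using gr by (simp add: mult.assoc)
  finally have "k' * (g' * ext_op b' r) = k' * (g' * (r * ext_op b 1))" by simp
  then have "ext_op b' r = r * ext_op b 1" using k' by (simp add: mult.assoc[symmetric] mult.commute[of k'])
  then have eq: "lam * dzt r + zinv * emb b' * r = r * (zinv * emb b)"
    by (simp add: ext_op_def)
  define C where "C = zinv * emb b - zinv * emb b'"
  have eqC: "lam * dzt r = C * r" using eq unfolding C_def by (simp add: algebra_simps)
  have C0: "C $ 0 = 0" using conn_obj_facts(1)[OF cb] conn_obj_facts(1)[OF cb'] by (simp add: C_def)
  have Ci: "C $ i = fps_to_fls (fps_shift 1 (b $ i - b' $ i))" if "i > 0" for i
  proof -
    have "(b $ i - b' $ i) $ 0 = 0" using conn_obj_facts(2)[OF cb, of i] conn_obj_facts(2)[OF cb', of i] by simp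
    then have "fls_X_intpow (-1) * fps_to_fls (b $ i - b' $ i) = fps_to_fls (fps_shift 1 (b $ i - b' $ i))"
      by (rule zinv_shift)
    then show ?thesis by (simp add: C_def algebra_simps)
  qed
  obtain v where v: "k' $ 0 * g $ 0 = fps_to_fls v" "v $ 0 \<noteq> 0"
  proof -
    have "g' $ 0 * k' $ 0 = 1" using arg_cong[OF k', of "\<lambda>x. x $ 0"] by simp
    moreover have "range (\<lambda>p. (g $ 0) * fps_to_fls p) = range (\<lambda>p. (g' $ 0) * fps_to_fls p)"
      using Lg Lg' by simp
    ultimately show ?thesis using lattice_lemma that by blast
  qed
  have r0: "r $ 0 = fps_to_fls v" using v by (simp add: r_def)
  have rP: "\<exists>p. r $ n = fps_to_fls p" for n
  proof (induct n rule: less_induct)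
    case (less n)
    show ?case
    proof (cases n)
      case 0 then show ?thesis using r0 by auto
    next
      case (Suc l)
      have "(lam * dzt r) $ Suc n = (C * r) $ Suc n" using eqC by simp
      moreover have "(lam * dzt r) $ Suc n = fls_deriv (r $ n)" by simp
      ultimately have "fls_deriv (r $ n) = (\<Sum>i=0..Suc n. C $ i * r $ (Suc n - i))"
        by (simp only: fps_mult_nth)
      also have "\<dots> = C $ 0 * r $ Suc n + (C $ 1 * r $ n + (\<Sum>i=2..Suc n. C $ i * r $ (Suc n - i)))"
        by (simp add: sum.atLeast_Suc_atMost numeral_2_eq_2)
      finally have "fls_deriv (r $ n) - fps_to_fls (fps_shift 1 (b $ 1 - b' $ 1)) * r $ n
          = (\<Sum>i=2..Suc n. C $ i * r $ (Suc n - i))" using C0 Ci[of 1] by simp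
      moreover have "\<exists>p. (\<Sum>i=2..Suc n. C $ i * r $ (Suc n - i)) = fps_to_fls p"
      proof (rule closed_sum, intro ballI)
        fix i assume i: "i \<in> {2..Suc n}"
        then obtain q where q: "r $ (Suc n - i) = fps_to_fls q" using less by fastforce
        show "\<exists>p. C $ i * r $ (Suc n - i) = fps_to_fls p"
          using i by (intro exI[of _ "fps_shift 1 (b $ i - b' $ i) * q"]) (simp add: Ci q fls_times_fps_to_fls)
      qed
      ultimately show ?thesis using key_fls by metis
    qed
  qed
  then obtain P where P: "\<And>n. r $ n = fps_to_fls (P n)" by metis
  define h where "h = Abs_fps P"
  have embh: "emb h = r" by (rule fps_ext) (simp add: h_def P)
  have h0: "h $ 0 = v" using P[of 0] r0 by (simp add: h_def)
  have hu: "is_unit_ser h"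
    unfolding is_unit_ser_def
    by (rule exI[of _ "fps_right_inverse h (inverse v)"], rule fps_right_inverse)
       (simp add: h0 inverse_mult_eq_1' v(2))
  have hom: "conn_hom b b' h"
    unfolding conn_hom_def
  proof (intro conjI hu allI)
    fix s
    have "conn_op b' (h * s) = lam * dzt r * emb s + lam * r * dzt (emb s) + zinv * emb b' * r * emb s"
      by (simp add: conn_op_def emb_mult embh dzt_mult algebra_simps)
    also have "\<dots> = (lam * dzt r + zinv * emb b' * r) * emb s + lam * r * dzt (emb s)"
      by (simp add: algebra_simps)
    also have "\<dots> = r * (zinv * emb b) * emb s + lam * r * dzt (emb s)"
      by (simp only: eq)
    also have "\<dots> = emb h * conn_op b s"
      by (simp add: conn_op_def embh algebra_simps)
    finally show "conn_op b' (h * s) = emb h * conn_op b s" .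
  qed
  have fh: "fib_hom (b, g) (b', g') h" unfolding fib_hom_def using hom gr embh by simp
  show ?thesis
  proof (rule ex1I[of _ h], rule fh)
    fix h2 assume "fib_hom (b, g) (b', g') h2"
    then have "g' * emb h2 = g' * emb h" using gr embh unfolding fib_hom_def by simp
    then have "k' * (g' * emb h2) = k' * (g' * emb h)" by simp
    then have "emb h2 = emb h" using k' by (simp add: mult.assoc[symmetric] mult.commute[of k'])
    then show "h2 = h" by (rule emb_inj)
  qed
qed

lemma fps_deriv_inv_id:
  fixes r k :: "complex fls fps"
  assumes "r * k = 1"
  shows "fps_deriv (dzt r * k) = dzt (fps_deriv r * k)"
proof -
  have kr: "k * r = 1" using assms by (simp add: mult.commute)
  have "fps_deriv (r * k) = 0" using assms by simp
  then have h1: "r * fps_deriv k = - (fps_deriv r * k)" by (simp add: eq_neg_iff_add_eq_0)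
  have "fps_deriv k = (k * r) * fps_deriv k" using kr by simp
  also have "\<dots> = k * (r * fps_deriv k)" by (simp only: mult.assoc)
  also have "\<dots> = - (k * k * fps_deriv r)" by (simp only: h1) (simp add: algebra_simps)
  finally have dk: "fps_deriv k = - (k * k * fps_deriv r)" .
  have "dzt (r * k) = 0" using assms by simp
  then have h2: "r * dzt k = - (dzt r * k)" by (simp add: dzt_mult eq_neg_iff_add_eq_0 add.commute)
  have "dzt k = (k * r) * dzt k" using kr by simp
  also have "\<dots> = k * (r * dzt k)" by (simp only: mult.assoc)
  also have "\<dots> = - (k * k * dzt r)" by (simp only: h2) (simp add: algebra_simps)
  finally have zk: "dzt k = - (k * k * dzt r)" .
  show ?thesis
    by (simp add: dzt_mult dk zk dzt_deriv algebra_simps)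
qed

lemma res_of_nat_times:
  fixes f :: "complex fls"
  assumes "fls_residue (of_nat (Suc l) * f) = 0"
  shows "fls_residue f = 0"
proof -
  have "(of_nat (Suc l) :: complex fls) = fls_const (of_nat (Suc l))" by (simp add: fls_of_nat)
  then have "of_nat (Suc l) * fls_residue f = 0" using assms fls_residue_fls_const_times(1)[of "of_nat (Suc l)" f]
    by simp
  then show ?thesis by (simp del: of_nat_Suc)
qed

lemma part2a:
  assumes uu: "is_unit_ser u" and uL: "range (\<lambda>p. (u $ 0) * fps_to_fls p) = L0"
    and a_def: "\<forall>s. D (u * s) = u * (lam * dzt s + a * s)"
    and x: "fib_obj m D L0 (b, g)"
  shows "(\<exists>p. a $ 1 = fls_X_intpow (-1) * fps_to_fls p) \<and>
             (\<forall>i. fls_residue (a $ i) = (if i = 1 then -1/2 else 0))"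
proof -
  from x have cb: "conn_obj m b" and gu: "is_unit_ser g" and Dg: "\<forall>s. D (g * s) = g * ext_op b s"
    and Lg: "range (\<lambda>p. (g $ 0) * fps_to_fls p) = L0" unfolding fib_obj_def by auto
  obtain ku where ku: "u * ku = 1" using uu unfolding is_unit_ser_def by auto
  obtain kg where kg: "g * kg = 1" using gu unfolding is_unit_ser_def by auto
  define r where "r = ku * g"
  define k where "k = kg * u"
  have ur: "u * r = g" using ku by (simp add: r_def mult.assoc[symmetric])
  have rk: "r * k = 1" using ku kg
    by (simp add: r_def k_def mult.assoc) (metis mult.assoc mult.commute mult_1_right)
  have "u * (lam * dzt r + a * r) = g * ext_op b 1" using a_def Dg ur by (metis mult_1_right)
  also have "\<dots> = u * (r * (zinv * emb b))" using ur by (simp add: ext_op_one mult.assoc)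
  finally have "ku * (u * (lam * dzt r + a * r)) = ku * (u * (r * (zinv * emb b)))" by simp
  then have eq: "lam * dzt r + a * r = r * (zinv * emb b)"
    using ku by (simp only: mult.assoc[symmetric] mult.commute[of ku] mult_1_left)
  define q where "q = dzt r * k"
  have "a = a * (r * k)" using rk by simp
  also have "\<dots> = (lam * dzt r + a * r) * k - lam * q" by (simp add: q_def algebra_simps)
  also have "\<dots> = zinv * emb b - lam * q" using rk by (simp add: eq mult.assoc)
  finally have aeq: "a = zinv * emb b - lam * q" .
  have ai: "a $ i = fls_X_intpow (-1) * fps_to_fls (b $ i) - (if i = 0 then 0 else q $ (i - 1))" for i
    by (subst aeq) simp
  obtain v where v: "ku $ 0 * g $ 0 = fps_to_fls v" "v $ 0 \<noteq> 0"
  proof -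
    have "u $ 0 * ku $ 0 = 1" using arg_cong[OF ku, of "\<lambda>x. x $ 0"] by simp
    moreover have "range (\<lambda>p. (g $ 0) * fps_to_fls p) = range (\<lambda>p. (u $ 0) * fps_to_fls p)"
      using Lg uL by simp
    ultimately show ?thesis using lattice_lemma that by blast
  qed
  have r0: "r $ 0 = fps_to_fls v" using v by (simp add: r_def)
  have k0r0: "k $ 0 * r $ 0 = 1" using arg_cong[OF rk, of "\<lambda>x. x $ 0"] by (simp add: mult.commute)
  have vi: "fps_to_fls v * fps_to_fls (inverse v) = 1"
    using inverse_mult_eq_1'[OF v(2)] by (simp flip: fls_times_fps_to_fls)
  have "k $ 0 = k $ 0 * (fps_to_fls v * fps_to_fls (inverse v))" using vi by simp
  also have "\<dots> = fps_to_fls (inverse v)" using k0r0 r0 by (simp add: mult.assoc[symmetric])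
  finally have k0: "k $ 0 = fps_to_fls (inverse v)" .
  define w where "w = fps_deriv v * inverse v"
  have q0: "q $ 0 = fps_to_fls w"
    by (simp add: q_def w_def r0 k0 fls_deriv_fps_to_fls fls_times_fps_to_fls)
  have qS: "fls_residue (q $ Suc l) = 0" for l
  proof -
    have "fps_deriv q $ l = dzt (fps_deriv r * k) $ l" using fps_deriv_inv_id[OF rk] by (simp add: q_def)
    then have "of_nat (Suc l) * q $ Suc l = fls_deriv ((fps_deriv r * k) $ l)" by simp
    then have "fls_residue (of_nat (Suc l) * q $ Suc l) = 0" by (simp only: fls_residue_deriv)
    then show ?thesis by (rule res_of_nat_times)
  qed
  have A1: "a $ 1 = fls_X_intpow (-1) * fps_to_fls (b $ 1 - fps_X * w)"
    using ai[of 1] q0 zinv_X[of w] by (simp add: algebra_simps)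
  have A2: "fls_residue (a $ i) = (if i = 1 then -1/2 else 0)" for i
  proof (cases i)
    case 0
    then show ?thesis using ai[of 0] res_zinv[of "b $ 0"] conn_obj_facts(2)[OF cb, of 0]
      by (simp del: fls_residue_def) 
  next
    case (Suc j)
    have "fls_residue (a $ i) = fls_residue (fls_X_intpow (-1) * fps_to_fls (b $ i)) - fls_residue (q $ j)"
      using ai[of i] Suc by simp
    also have "\<dots> = (b $ i) $ 0 - fls_residue (q $ j)" by (simp only: res_zinv)
    also have "fls_residue (q $ j) = 0"
      using qS q0 by (cases j) (simp_all add: fls_residue_power_series fls_subdegree_fls_to_fps_gt0 del: fls_residue_def)
    finally show ?thesis using conn_obj_facts(2)[OF cb, of i] by simp
  qed
  show ?thesis using A1 A2 by blast
qed

lemma part2b: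
  assumes uu: "is_unit_ser u" and uL: "range (\<lambda>p. (u $ 0) * fps_to_fls p) = L0"
    and a_def: "\<forall>s. D (u * s) = u * (lam * dzt s + a * s)"
    and CC2: "\<forall>s. (D s) $ 0 = fps_to_fls m * (s $ 0)"
    and A1: "a $ 1 = fls_X_intpow (-1) * fps_to_fls p"
    and A2: "\<forall>i. fls_residue (a $ i) = (if i = 1 then -1/2 else 0)"
  shows "\<exists>x. fib_obj m D L0 x"
proof -
  obtain ku where ku: "u * ku = 1" using uu unfolding is_unit_ser_def by auto
  have u0: "u $ 0 * ku $ 0 = 1" using arg_cong[OF ku, of "\<lambda>x. x $ 0"] by simp
  have "D (u * 1) = u * a" using a_def[rule_format, of 1] by simp
  then have "u $ 0 * a $ 0 = fps_to_fls m * u $ 0" using CC2 by (metis fps_mult_nth_0 mult_1_right)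
  then have "ku $ 0 * (u $ 0 * a $ 0) = ku $ 0 * (u $ 0 * fps_to_fls m)" by (simp add: mult.commute)
  then have a0: "a $ 0 = fps_to_fls m" using u0
    by (simp only: mult.assoc[symmetric] mult.commute[of "ku $ 0"] mult_1_left)
  define T :: "complex fls fps" where "T = Abs_fps (\<lambda>n. if n = 0 then 0 else - (a $ (n + 1)))"
  define V :: "complex fls fps" where "V = Abs_fps (\<lambda>n. fls_integral (T $ n))"
  have resT: "fls_residue (T $ n) = 0" for n
  proof (cases "n = 0")
    case False
    then have "fls_residue (a $ (n + 1)) = 0" using A2 by simp
    then show ?thesis using False by (simp add: T_def)
  qed (simp add: T_def)
  have dV: "dzt V = T"
  proof (rule fps_ext)
    fix n show "dzt V $ n = T $ n"
      using fls_deriv_fls_integral[OF resT[of n]] by (simp add: V_def)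
  qed
  have V0: "V $ 0 = 0" by (simp add: V_def T_def)
  define r where "r = fps_exp (1::complex fls) oo V"
  have r0: "r $ 0 = 1" by (simp add: r_def)
  have dr: "fps_deriv r = r * fps_deriv V"
    unfolding r_def by (simp add: fps_compose_deriv[OF V0])
  define E where "E = dzt r - r * T"
  have "fps_deriv E = dzt (fps_deriv r) - fps_deriv (r * T)"
    by (simp add: E_def dzt_deriv del: fps_deriv_mult)
  also have "\<dots> = dzt r * fps_deriv V + r * fps_deriv T - (r * fps_deriv T + r * fps_deriv V * T)"
    by (simp add: dr dzt_mult dzt_deriv dV)
  also have "\<dots> = E * fps_deriv V" by (simp add: E_def algebra_simps)
  finally have "E = 0" by (rule deriv_unique) (simp add: E_def r0 T_def)
  then have drT: "dzt r = r * T" by (simp add: E_def)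
  have kr: "r * fps_right_inverse r 1 = 1" by (rule fps_right_inverse) (simp add: r0)
  define b :: "complex fps fps" where "b = fps_const (fps_X * m) + fps_X * fps_const p"
  have zb: "(zinv * emb b) $ n = (if n = 0 then fps_to_fls m else if n = 1 then a $ 1 else 0)" for n
  proof -
    have bn: "b $ n = (if n = 0 then fps_X * m else if n = 1 then p else 0)" by (simp add: b_def)
    show ?thesis by (simp only: zinv_nth emb_nth bn) (auto simp: zinv_X[simplified] A1[simplified])
  qed
  define g where "g = u * r"
  have LT: "lam * T + a = zinv * emb b"
  proof (rule fps_ext)
    fix n show "(lam * T + a) $ n = (zinv * emb b) $ n"
      by (simp only: zb fps_add_nth lam_nth) (cases n; simp add: a0 T_def)
  qed
  have "conn_obj m b"
    unfolding conn_obj_def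
  proof (intro conjI allI)
    fix i
    show "fls_residue (conn_op b 1 $ i) = (if i = 1 then - 1 / 2 else 0)"
      unfolding conn_op_one zb using A2 by ((auto simp del: fls_residue_def); simp add: fls_residue_def)
  next
    fix s
    show "conn_op b s $ 0 = fps_to_fls m * fps_to_fls (s $ 0)"
    proof -
      have l: "(lam * dzt (emb s)) $ 0 = 0" by (rule trans[OF lam_nth]) simp
      have z: "(zinv * emb b * emb s) $ 0 = (zinv * emb b) $ 0 * (emb s) $ 0" by (rule fps_mult_nth_0)
      show ?thesis unfolding conn_op_def fps_add_nth l z zb by simp
    qed
  qed
  moreover have "is_unit_ser g"
    unfolding is_unit_ser_def g_def
    by (rule exI[of _ "fps_right_inverse r 1 * ku"])
       (metis ku kr mult.assoc mult.commute mult_1_right)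
  moreover have "\<forall>s. D (g * s) = g * ext_op b s"
  proof
    fix s
    have "D (g * s) = u * (lam * dzt (r * s) + a * (r * s))" using a_def by (simp add: g_def mult.assoc)
    also have "\<dots> = u * (lam * (r * T * s + r * dzt s) + a * (r * s))" by (simp add: dzt_mult drT)
    also have "\<dots> = u * r * (lam * dzt s + (lam * T + a) * s)" by (simp add: algebra_simps)
    also have "\<dots> = g * ext_op b s" by (simp only: LT g_def ext_op_def mult.assoc)
    finally show "D (g * s) = g * ext_op b s" .
  qed
  moreover have "range (\<lambda>p. (g $ 0) * fps_to_fls p) = L0" using uL by (simp add: g_def r0)
  ultimately have "fib_obj m D L0 (b, g)" unfolding fib_obj_def by simp
  then show ?thesis by blast
qed

theorem corollary4p9:
  fixes t d w :: "complex fps"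
    and D :: "complex fls fps \<Rightarrow> complex fls fps"
    and L0 :: "complex fls set"
    and u a :: "complex fls fps"
  assumes simple_zero: "(t^2 - 4 * d) $ 0 = 0" "(t^2 - 4 * d) $ 1 \<noteq> 0"
    and spectral: "w $ 0 = 0" "(t^2 - 4 * d) oo w = fps_X ^ 2"
    and CC_obj: "lambda_conn D"
      "\<forall>s. (D s) $ 0 = fps_to_fls (mu_coeff t d w) * (s $ 0)"
      "is_lattice L0"
    and iota: "is_unit_ser u" "range (\<lambda>p. (u $ 0) * fps_to_fls p) = L0"
    and a_def: "\<forall>s. D (u * s) = u * (lam * dzt s + a * s)"
  shows "(\<forall>x y. fib_obj (mu_coeff t d w) D L0 x \<and> fib_obj (mu_coeff t d w) D L0 y
              \<longrightarrow> (\<exists>!h. fib_hom x y h))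
       \<and> ((\<exists>x. fib_obj (mu_coeff t d w) D L0 x) \<longleftrightarrow>
            ((\<exists>p. a $ 1 = fls_X_intpow (-1) * fps_to_fls p) \<and>
             (\<forall>i. fls_residue (a $ i) = (if i = 1 then -1/2 else 0))))"
proof -
  let ?m = "mu_coeff t d w"
  have P1: "\<forall>x y. fib_obj ?m D L0 x \<and> fib_obj ?m D L0 y \<longrightarrow> (\<exists>!h. fib_hom x y h)"
  proof (intro allI impI)
    fix x y assume "fib_obj ?m D L0 x \<and> fib_obj ?m D L0 y"
    then show "\<exists>!h. fib_hom x y h" using part1 by (cases x, cases y) blast
  qed
  have P2: "(\<exists>x. fib_obj ?m D L0 x) \<Longrightarrow> ((\<exists>p. a $ 1 = fls_X_intpow (-1) * fps_to_fls p) \<and>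
             (\<forall>i. fls_residue (a $ i) = (if i = 1 then -1/2 else 0)))"
  proof -
    assume "\<exists>x. fib_obj ?m D L0 x"
    then obtain b g where "fib_obj ?m D L0 (b, g)" by auto
    then show ?thesis using part2a[OF iota a_def] by blast
  qed
  have P3: "((\<exists>p. a $ 1 = fls_X_intpow (-1) * fps_to_fls p) \<and>
             (\<forall>i. fls_residue (a $ i) = (if i = 1 then -1/2 else 0))) \<Longrightarrow> (\<exists>x. fib_obj ?m D L0 x)"
  proof -
    assume "(\<exists>p. a $ 1 = fls_X_intpow (-1) * fps_to_fls p) \<and>
             (\<forall>i. fls_residue (a $ i) = (if i = 1 then -1/2 else 0))"
    then obtain p where "a $ 1 = fls_X_intpow (-1) * fps_to_fls p"
      "\<forall>i. fls_residue (a $ i) = (if i = 1 then -1/2 else 0)" by blast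
    then show ?thesis using part2b[OF iota a_def CC_obj(2)] by blast
  qed
  show ?thesis using P1 P2 P3 by blast
qed

end
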